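(* Let $(a_n)_{n\ge0}$ be given by $a_n=1$ if $n+1$ is a power of $2$ and $a_n=0$ otherwise. Let $m$ and $K\ge0$ be integers with $1\le 2^K<m\le 2^{K+1}$, and for $n\ge0$ let $d(n,m)=\det\left(a_{i+j+m}\right)_{i,j=0}^{n-1}$ (with $d(0,m)=1$). Then $d(n,m)\in\{1,-1\}$ if $n\equiv 0\pmod{2^{K+1}}$ or $n\equiv -m\pmod{2^{K+1}}$, and $d(n,m)=0$ otherwise. *)

theory Defs
  imports "Jordan_Normal_Form.Determinant" "HOL-Number_Theory.Cong"
begin

definition a_seq :: "nat \<Rightarrow> int" where
  "a_seq n = (if \<exists>k::nat. n + 1 = 2 ^ k then 1 else 0)"

definition hankel_d :: "nat \<Rightarrow> nat \<Rightarrow> int" where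
  "hankel_d n m = det (mat n n (\<lambda>(i, j). a_seq (i + j + m)))"

end

theory Submission
  imports Defs
begin


lemma abs_sign_int: "\<bar>(of_int (sign p) :: int)\<bar> = 1"
  by (cases p rule: sign_cases) auto

lemma det_perm_both:
  fixes A :: "int mat"
  assumes A: "A \<in> carrier_mat n n" and p: "p permutes {0..<n}" and q: "q permutes {0..<n}"
  shows "\<bar>det (mat n n (\<lambda>(i,j). A $$ (p i, q j)))\<bar> = \<bar>det A\<bar>"
proof -
  let ?B = "mat n n (\<lambda>(i,j). A $$ (p i, j))"
  have B: "?B \<in> carrier_mat n n" by simp
  have dB: "det ?B = signof p * det A" by (rule det_permute_rows[OF A p])
  let ?C = "mat n n (\<lambda>(i,j). (transpose_mat ?B) $$ (q i, j))"
  have C: "det ?C = signof q * det (transpose_mat ?B)"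
    by (rule det_permute_rows[OF _ q], simp)
  have q': "\<And>j. j < n \<Longrightarrow> q j < n" using q permutes_in_image by fastforce
  have eq: "mat n n (\<lambda>(i,j). A $$ (p i, q j)) = transpose_mat ?C"
    by (rule eq_matI, auto simp: q')
  have "det (mat n n (\<lambda>(i,j). A $$ (p i, q j))) = det ?C"
    unfolding eq using det_transpose[of ?C n] by simp
  also have "\<dots> = signof q * (signof p * det A)" using C dB det_transpose[OF B] by simp
  finally show ?thesis by (simp add: abs_mult abs_sign_int)
qed

lemma zero_col_det:
  fixes A :: "int mat"
  assumes A: "A \<in> carrier_mat n n" and k: "k < n" and z: "\<And>i. i < n \<Longrightarrow> A $$ (i, k) = 0"
  shows "det A = 0"
proof -
  have "det A = (\<Sum> p | p permutes {0 ..< n}. signof p * (\<Prod>j<n. A $$ (p j, j)))"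
    by (rule det_col[OF A])
  also have "\<dots> = 0"
  proof (rule sum.neutral, intro ballI)
    fix p assume "p \<in> {p. p permutes {0..<n}}"
    hence "p k < n" using k permutes_in_image by fastforce
    hence "(\<Prod>j<n. A $$ (p j, j)) = 0" using k z by (intro prod_zero) auto
    thus "signof p * (\<Prod>j<n. A $$ (p j, j)) = 0" by simp
  qed
  finally show ?thesis .
qed

lemma block_det:
  fixes A :: "int mat"
  assumes A: "A \<in> carrier_mat n n" and p: "p permutes {0..<n}" and q: "q permutes {0..<n}"
    and k: "k \<le> n"
    and z: "\<And>i j. i < k \<Longrightarrow> k \<le> j \<Longrightarrow> j < n \<Longrightarrow> A $$ (p i, q j) = 0"
  shows "\<bar>det A\<bar> = \<bar>det (mat k k (\<lambda>(i,j). A $$ (p i, q j)))\<bar>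
     * \<bar>det (mat (n-k) (n-k) (\<lambda>(i,j). A $$ (p (k+i), q (k+j))))\<bar>"
proof -
  let ?A1 = "mat k k (\<lambda>(i,j). A $$ (p i, q j))"
  let ?A2 = "0\<^sub>m k (n-k) :: int mat"
  let ?A3 = "mat (n-k) k (\<lambda>(i,j). A $$ (p (k+i), q j))"
  let ?A4 = "mat (n-k) (n-k) (\<lambda>(i,j). A $$ (p (k+i), q (k+j)))"
  have eq: "mat n n (\<lambda>(i,j). A $$ (p i, q j)) = four_block_mat ?A1 ?A2 ?A3 ?A4"
    by (rule eq_matI, auto simp: four_block_mat_def Let_def k z)
  have "det (four_block_mat ?A1 ?A2 ?A3 ?A4) = det ?A1 * det ?A4"
    by (rule det_four_block_mat_upper_right_zero, auto)
  with det_perm_both[OF A p q] eq show ?thesis by (simp add: abs_mult)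
qed

lemma permutesI_nat:
  assumes "\<And>i. i < n \<Longrightarrow> p i < n" "inj_on p {0..<n}" "\<And>i. n \<le> i \<Longrightarrow> p i = i"
  shows "p permutes {0..<(n::nat)}"
proof (rule bij_imp_permutes)
  have "p ` {0..<n} \<subseteq> {0..<n}" using assms(1) by auto
  hence "p ` {0..<n} = {0..<n}" using assms(2) by (simp add: endo_inj_surj)
  thus "bij_betw p {0..<n} {0..<n}" using assms(2) by (simp add: bij_betw_def)
qed (use assms(3) in auto)

definition ev_first :: "nat \<Rightarrow> nat \<Rightarrow> nat" where
  "ev_first n i = (if i < n then (if i < (n+1) div 2 then 2*i else 2*(i - (n+1) div 2)+1) else i)"
definition od_first :: "nat \<Rightarrow> nat \<Rightarrow> nat" where
  "od_first n i = (if i < n then (if i < n div 2 then 2*i+1 else 2*(i - n div 2)) else i)"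
definition rot1 :: "nat \<Rightarrow> nat \<Rightarrow> nat" where
  "rot1 k i = (if i < k then i+1 else if i = k then 0 else i)"

lemma ev_first_perm: "ev_first n permutes {0..<n}"
  by (rule permutesI_nat) (auto simp: ev_first_def inj_on_def split: if_splits; presburger)+

lemma od_first_perm: "od_first n permutes {0..<n}"
  by (rule permutesI_nat) (auto simp: od_first_def inj_on_def split: if_splits; presburger)+

lemma rot1_perm: "rot1 k permutes {0..<Suc k}"
  by (rule permutesI_nat) (auto simp: rot1_def inj_on_def split: if_splits)


lemma a_odd: "a_seq (2*u+1) = a_seq u"
proof -
  have "(\<exists>k. 2*u+1+1 = (2::nat)^k) \<longleftrightarrow> (\<exists>k. u+1 = (2::nat)^k)"
  proof
    assume "\<exists>k. 2*u+1+1 = (2::nat)^k"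
    then obtain k where k: "2*u+2 = (2::nat)^k" by auto
    then have "k \<noteq> 0" by (cases k) auto
    then obtain k' where "k = Suc k'" by (cases k) auto
    with k have "u+1 = 2^k'" by simp
    thus "\<exists>k. u+1 = (2::nat)^k" by blast
  next
    assume "\<exists>k. u+1 = (2::nat)^k"
    then obtain k where "u+1 = (2::nat)^k" by auto
    then have "2*u+1+1 = 2^Suc k" by simp
    thus "\<exists>k. 2*u+1+1 = (2::nat)^k" by blast
  qed
  thus ?thesis unfolding a_seq_def by simp
qed

lemma a_even: "a_seq (2*u) = (if u = 0 then 1 else 0)"
proof -
  have "(\<exists>k. 2*u+1 = (2::nat)^k) \<longleftrightarrow> u = 0"
  proof
    assume "\<exists>k. 2*u+1 = (2::nat)^k"
    then obtain k where k: "2*u+1 = (2::nat)^k" by auto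
    show "u = 0"
    proof (cases k)
      case (Suc k') with k have "2*u+1 = 2*2^k'" by simp
      then show ?thesis by presburger
    qed (use k in auto)
  qed (auto intro!: exI[of _ 0])
  thus ?thesis unfolding a_seq_def by simp
qed

lemma a_even': "even s \<Longrightarrow> s \<noteq> 0 \<Longrightarrow> a_seq s = 0"
  using a_even[of "s div 2"] by auto

lemma a_odd': "odd s \<Longrightarrow> a_seq s = a_seq (s div 2)"
  using a_odd[of "s div 2"] by (simp add: odd_two_times_div_two_succ)

definition H :: "nat \<Rightarrow> nat \<Rightarrow> int mat" where
  "H n m = mat n n (\<lambda>(i,j). a_seq (i+j+m))"

lemma hd_H: "hankel_d n m = det (H n m)" unfolding hankel_d_def H_def by simp

lemma H_carrier[simp]: "H n m \<in> carrier_mat n n" unfolding H_def by simp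

lemma H_idx[simp]: "i < n \<Longrightarrow> j < n \<Longrightarrow> H n m $$ (i,j) = a_seq (i+j+m)"
  unfolding H_def by simp

lemma ev_lo: "i < Suc n div 2 \<Longrightarrow> ev_first n i = 2*i" unfolding ev_first_def by auto
lemma ev_hi: "i < n div 2 \<Longrightarrow> ev_first n (Suc n div 2 + i) = 2*i+1" unfolding ev_first_def by auto
lemma od_lo: "i < n div 2 \<Longrightarrow> od_first n i = 2*i+1" unfolding od_first_def by auto
lemma ev_hi': "k = (n+1) div 2 \<Longrightarrow> i < n div 2 \<Longrightarrow> ev_first n (k + i) = 2*i+1" using ev_hi by simp
lemma ev_lo': "k = (n+1) div 2 \<Longrightarrow> i < k \<Longrightarrow> ev_first n i = 2*i" using ev_lo by simp
lemma od_hi': "k = n div 2 \<Longrightarrow> i < (n+1) div 2 \<Longrightarrow> od_first n (k + i) = 2*i" unfolding od_first_def by auto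
lemma od_lo': "k = n div 2 \<Longrightarrow> i < k \<Longrightarrow> od_first n i = 2*i+1" unfolding od_first_def by auto
lemma od_hi: "i < Suc n div 2 \<Longrightarrow> od_first n (n div 2 + i) = 2*i" unfolding od_first_def by auto

lemma L1: "\<bar>hankel_d n (2*m+1)\<bar> = \<bar>hankel_d ((n+1) div 2) m\<bar> * \<bar>hankel_d (n div 2) (m+1)\<bar>"
proof -
  define k where "k = (n+1) div 2"
  let ?k = k
  have nk: "n - ?k = n div 2" unfolding k_def by simp
  have b1: "2*i < n" if "i < k" for i using that unfolding k_def by linarith
  have b2: "2*i+1 < n" if "i < n div 2" for i using that by linarith
  have z: "H n (2*m+1) $$ (ev_first n i, ev_first n j) = 0" if "i < ?k" "?k \<le> j" "j < n" for i j
  proof -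
    define j' where "j' = j - ?k"
    have j: "j = ?k + j'" "j' < n div 2" using that nk unfolding j'_def by auto
    have "H n (2*m+1) $$ (ev_first n i, ev_first n j) = a_seq (2*i + (2*j'+1) + (2*m+1))"
      using that j by (simp add: ev_lo'[OF k_def] ev_hi'[OF k_def] nk b1 b2)
    also have "\<dots> = 0" by (rule a_even') presburger+
    finally show ?thesis .
  qed
  have "\<bar>det (H n (2*m+1))\<bar> = \<bar>det (mat ?k ?k (\<lambda>(i,j). H n (2*m+1) $$ (ev_first n i, ev_first n j)))\<bar>
     * \<bar>det (mat (n-?k) (n-?k) (\<lambda>(i,j). H n (2*m+1) $$ (ev_first n (?k+i), ev_first n (?k+j))))\<bar>"
    by (rule block_det[OF H_carrier ev_first_perm ev_first_perm]) (use z in \<open>auto simp: k_def\<close>)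
  also have "mat ?k ?k (\<lambda>(i,j). H n (2*m+1) $$ (ev_first n i, ev_first n j)) = H ?k m"
  proof (rule eq_matI)
    fix i j assume "i < dim_row (H ?k m)" "j < dim_col (H ?k m)"
    hence ij: "i < ?k" "j < ?k" unfolding H_def by auto
    have "H n (2*m+1) $$ (ev_first n i, ev_first n j) = a_seq (2*i+2*j+(2*m+1))"
      using ij by (simp add: ev_lo'[OF k_def] b1)
    also have "\<dots> = a_seq (2*(i+j+m)+1)" by (intro arg_cong[where f=a_seq]) simp
    also have "\<dots> = a_seq (i+j+m)" by (rule a_odd)
    finally show "mat ?k ?k (\<lambda>(i,j). H n (2*m+1) $$ (ev_first n i, ev_first n j)) $$ (i,j) = H ?k m $$ (i,j)"
      using ij by simp
  qed (auto simp: H_def)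
  also have "mat (n-?k) (n-?k) (\<lambda>(i,j). H n (2*m+1) $$ (ev_first n (?k+i), ev_first n (?k+j))) = H (n div 2) (m+1)"
  proof (rule eq_matI)
    fix i j assume "i < dim_row (H (n div 2) (m+1))" "j < dim_col (H (n div 2) (m+1))"
    hence ij: "i < n div 2" "j < n div 2" unfolding H_def by auto
    have "H n (2*m+1) $$ (ev_first n (?k+i), ev_first n (?k+j)) = a_seq ((2*i+1)+(2*j+1)+(2*m+1))"
      using ij by (simp add: ev_hi'[OF k_def] nk b2)
    also have "\<dots> = a_seq (2*(i+j+(m+1))+1)" by (intro arg_cong[where f=a_seq]) simp
    also have "\<dots> = a_seq (i+j+(m+1))" by (rule a_odd)
    finally show "mat (n-?k) (n-?k) (\<lambda>(i,j). H n (2*m+1) $$ (ev_first n (?k+i), ev_first n (?k+j))) $$ (i,j) = H (n div 2) (m+1) $$ (i,j)"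
      using ij nk by simp
  qed (auto simp: H_def nk)
  finally show ?thesis by (simp add: hd_H k_def)
qed


lemma E0a: "i < k \<Longrightarrow> ev_first (2*k) i = 2*i" unfolding ev_first_def by auto
lemma E0b: "i < k \<Longrightarrow> ev_first (2*k) (k+i) = 2*i+1" unfolding ev_first_def by auto
lemma O0a: "i < k \<Longrightarrow> od_first (2*k) i = 2*i+1" unfolding od_first_def by auto
lemma O0b: "i < k \<Longrightarrow> od_first (2*k) (k+i) = 2*i" unfolding od_first_def by auto
lemma E1a: "i < Suc k \<Longrightarrow> ev_first (Suc (2*k)) i = 2*i" unfolding ev_first_def by auto
lemma E1b: "i < k \<Longrightarrow> ev_first (Suc (2*k)) (Suc k+i) = 2*i+1" unfolding ev_first_def by auto
lemma O1a: "i < k \<Longrightarrow> od_first (Suc (2*k)) i = 2*i+1" unfolding od_first_def by auto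
lemma O1b: "i < Suc k \<Longrightarrow> od_first (Suc (2*k)) (k+i) = 2*i" unfolding od_first_def by auto

lemma L2:
  assumes m: "m \<ge> 1"
  shows "\<bar>hankel_d (2*k) (2*m)\<bar> = \<bar>hankel_d k m\<bar> * \<bar>hankel_d k m\<bar>"
proof -
  have z: "H (2*k) (2*m) $$ (ev_first (2*k) i, od_first (2*k) j) = 0" if "i < k" "k \<le> j" "j < 2*k" for i j
  proof -
    define j' where "j' = j - k"
    have j: "j = k + j'" "j' < k" using that unfolding j'_def by auto
    have "H (2*k) (2*m) $$ (ev_first (2*k) i, od_first (2*k) j) = a_seq (2*i + 2*j' + 2*m)"
      using that j by (simp add: E0a O0b)
    also have "\<dots> = 0" by (rule a_even') (use m in presburger)+
    finally show ?thesis .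
  qed
  have "\<bar>det (H (2*k) (2*m))\<bar> = \<bar>det (mat k k (\<lambda>(i,j). H (2*k) (2*m) $$ (ev_first (2*k) i, od_first (2*k) j)))\<bar>
     * \<bar>det (mat (2*k-k) (2*k-k) (\<lambda>(i,j). H (2*k) (2*m) $$ (ev_first (2*k) (k+i), od_first (2*k) (k+j))))\<bar>"
    by (rule block_det[OF H_carrier ev_first_perm od_first_perm]) (use z in auto)
  also have "mat k k (\<lambda>(i,j). H (2*k) (2*m) $$ (ev_first (2*k) i, od_first (2*k) j)) = H k m"
  proof (rule eq_matI)
    fix i j assume "i < dim_row (H k m)" "j < dim_col (H k m)"
    hence ij: "i < k" "j < k" unfolding H_def by auto
    have "H (2*k) (2*m) $$ (ev_first (2*k) i, od_first (2*k) j) = a_seq (2*i+(2*j+1)+2*m)"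
      using ij by (simp add: E0a O0a)
    also have "\<dots> = a_seq (2*(i+j+m)+1)" by (intro arg_cong[where f=a_seq]) simp
    also have "\<dots> = a_seq (i+j+m)" by (rule a_odd)
    finally show "mat k k (\<lambda>(i,j). H (2*k) (2*m) $$ (ev_first (2*k) i, od_first (2*k) j)) $$ (i,j) = H k m $$ (i,j)"
      using ij by simp
  qed (auto simp: H_def)
  also have "mat (2*k-k) (2*k-k) (\<lambda>(i,j). H (2*k) (2*m) $$ (ev_first (2*k) (k+i), od_first (2*k) (k+j))) = H k m"
  proof (rule eq_matI)
    fix i j assume "i < dim_row (H k m)" "j < dim_col (H k m)"
    hence ij: "i < k" "j < k" unfolding H_def by auto
    have "H (2*k) (2*m) $$ (ev_first (2*k) (k+i), od_first (2*k) (k+j)) = a_seq ((2*i+1)+2*j+2*m)"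
      using ij by (simp add: E0b O0b)
    also have "\<dots> = a_seq (2*(i+j+m)+1)" by (intro arg_cong[where f=a_seq]) simp
    also have "\<dots> = a_seq (i+j+m)" by (rule a_odd)
    finally show "mat (2*k-k) (2*k-k) (\<lambda>(i,j). H (2*k) (2*m) $$ (ev_first (2*k) (k+i), od_first (2*k) (k+j))) $$ (i,j) = H k m $$ (i,j)"
      using ij by simp
  qed (auto simp: H_def)
  finally show ?thesis by (simp add: hd_H)
qed

lemma L3:
  assumes m: "m \<ge> 1"
  shows "hankel_d (2*k+1) (2*m) = 0"
proof -
  let ?n = "2*k+1"
  have z: "H ?n (2*m) $$ (ev_first ?n i, od_first ?n j) = 0" if "i < Suc k" "Suc k \<le> j" "j < ?n" for i j
  proof -
    define j' where "j' = j - k"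
    have j: "j = k + j'" "j' < Suc k" using that unfolding j'_def by auto
    have "H ?n (2*m) $$ (ev_first ?n i, od_first ?n j) = a_seq (2*i + 2*j' + 2*m)"
      using that j by (simp add: E1a O1b)
    also have "\<dots> = 0" by (rule a_even') (use m in presburger)+
    finally show ?thesis .
  qed
  have "\<bar>det (H ?n (2*m))\<bar> = \<bar>det (mat (Suc k) (Suc k) (\<lambda>(i,j). H ?n (2*m) $$ (ev_first ?n i, od_first ?n j)))\<bar>
     * \<bar>det (mat (?n-Suc k) (?n-Suc k) (\<lambda>(i,j). H ?n (2*m) $$ (ev_first ?n (Suc k+i), od_first ?n (Suc k+j))))\<bar>"
    by (rule block_det[OF H_carrier ev_first_perm od_first_perm]) (use z in auto)
  also have "det (mat (Suc k) (Suc k) (\<lambda>(i,j). H ?n (2*m) $$ (ev_first ?n i, od_first ?n j))) = 0"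
  proof (rule zero_col_det[of _ "Suc k" k])
    fix i assume i: "i < Suc k"
    have "mat (Suc k) (Suc k) (\<lambda>(i,j). H ?n (2*m) $$ (ev_first ?n i, od_first ?n j)) $$ (i,k) = a_seq (2*i+0+2*m)"
      using i O1b[of 0 k] by (simp add: E1a)
    also have "\<dots> = 0" by (rule a_even') (use m in presburger)+
    finally show "mat (Suc k) (Suc k) (\<lambda>(i,j). H ?n (2*m) $$ (ev_first ?n i, od_first ?n j)) $$ (i,k) = 0" .
  qed auto
  finally show ?thesis by (simp add: hd_H)
qed


lemma L5: "\<bar>hankel_d (2*k) 0\<bar> = \<bar>hankel_d k 0\<bar> * \<bar>hankel_d k 0\<bar>"
proof -
  have z: "H (2*k) 0 $$ (od_first (2*k) i, ev_first (2*k) j) = 0" if "i < k" "k \<le> j" "j < 2*k" for i j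
  proof -
    define j' where "j' = j - k"
    have j: "j = k + j'" "j' < k" using that unfolding j'_def by auto
    have "H (2*k) 0 $$ (od_first (2*k) i, ev_first (2*k) j) = a_seq ((2*i+1) + (2*j'+1) + 0)"
      using that j by (simp add: O0a E0b)
    also have "\<dots> = 0" by (rule a_even') presburger+
    finally show ?thesis .
  qed
  have "\<bar>det (H (2*k) 0)\<bar> = \<bar>det (mat k k (\<lambda>(i,j). H (2*k) 0 $$ (od_first (2*k) i, ev_first (2*k) j)))\<bar>
     * \<bar>det (mat (2*k-k) (2*k-k) (\<lambda>(i,j). H (2*k) 0 $$ (od_first (2*k) (k+i), ev_first (2*k) (k+j))))\<bar>"
    by (rule block_det[OF H_carrier od_first_perm ev_first_perm]) (use z in auto)
  also have "mat k k (\<lambda>(i,j). H (2*k) 0 $$ (od_first (2*k) i, ev_first (2*k) j)) = H k 0"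
  proof (rule eq_matI)
    fix i j assume "i < dim_row (H k 0)" "j < dim_col (H k 0)"
    hence ij: "i < k" "j < k" unfolding H_def by auto
    have "H (2*k) 0 $$ (od_first (2*k) i, ev_first (2*k) j) = a_seq ((2*i+1)+2*j+0)"
      using ij by (simp add: E0a O0a)
    also have "\<dots> = a_seq (2*(i+j+0)+1)" by (intro arg_cong[where f=a_seq]) simp
    also have "\<dots> = a_seq (i+j+0)" by (rule a_odd)
    finally show "mat k k (\<lambda>(i,j). H (2*k) 0 $$ (od_first (2*k) i, ev_first (2*k) j)) $$ (i,j) = H k 0 $$ (i,j)"
      using ij by simp
  qed (auto simp: H_def)
  also have "mat (2*k-k) (2*k-k) (\<lambda>(i,j). H (2*k) 0 $$ (od_first (2*k) (k+i), ev_first (2*k) (k+j))) = H k 0"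
  proof (rule eq_matI)
    fix i j assume "i < dim_row (H k 0)" "j < dim_col (H k 0)"
    hence ij: "i < k" "j < k" unfolding H_def by auto
    have "H (2*k) 0 $$ (od_first (2*k) (k+i), ev_first (2*k) (k+j)) = a_seq (2*i+(2*j+1)+0)"
      using ij by (simp add: E0b O0b)
    also have "\<dots> = a_seq (2*(i+j+0)+1)" by (intro arg_cong[where f=a_seq]) simp
    also have "\<dots> = a_seq (i+j+0)" by (rule a_odd)
    finally show "mat (2*k-k) (2*k-k) (\<lambda>(i,j). H (2*k) 0 $$ (od_first (2*k) (k+i), ev_first (2*k) (k+j))) $$ (i,j) = H k 0 $$ (i,j)"
      using ij by simp
  qed (auto simp: H_def)
  finally show ?thesis by (simp add: hd_H)
qed

lemma L4: "\<bar>hankel_d (2*k+1) 0\<bar> = \<bar>hankel_d k 1\<bar> * \<bar>hankel_d k 1\<bar>"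
proof -
  let ?n = "2*k+1"
  have z: "H ?n 0 $$ (ev_first ?n i, od_first ?n j) = 0" if "i < Suc k" "Suc k \<le> j" "j < ?n" for i j
  proof -
    define j' where "j' = j - k"
    have j: "j = k + j'" "j' < Suc k" "j' \<ge> 1" using that unfolding j'_def by auto
    have "H ?n 0 $$ (ev_first ?n i, od_first ?n j) = a_seq (2*i + 2*j' + 0)"
      using that j by (simp add: E1a O1b)
    also have "\<dots> = 0" by (rule a_even') (use j in presburger)+
    finally show ?thesis .
  qed
  let ?B = "mat (Suc k) (Suc k) (\<lambda>(i,j). H ?n 0 $$ (ev_first ?n i, od_first ?n j))"
  have "\<bar>det (H ?n 0)\<bar> = \<bar>det ?B\<bar>
     * \<bar>det (mat (?n-Suc k) (?n-Suc k) (\<lambda>(i,j). H ?n 0 $$ (ev_first ?n (Suc k+i), od_first ?n (Suc k+j))))\<bar>"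
    by (rule block_det[OF H_carrier ev_first_perm od_first_perm]) (use z in auto)
  also have "mat (?n-Suc k) (?n-Suc k) (\<lambda>(i,j). H ?n 0 $$ (ev_first ?n (Suc k+i), od_first ?n (Suc k+j))) = H k 1"
  proof (rule eq_matI)
    fix i j assume "i < dim_row (H k 1)" "j < dim_col (H k 1)"
    hence ij: "i < k" "j < k" unfolding H_def by auto
    have "H ?n 0 $$ (ev_first ?n (Suc k+i), od_first ?n (Suc k+j)) = a_seq ((2*i+1)+2*(Suc j)+0)"
      using ij O1b[of "Suc j" k] E1b[of i k] by simp
    also have "\<dots> = a_seq (2*(i+j+1)+1)" by (intro arg_cong[where f=a_seq]) simp
    also have "\<dots> = a_seq (i+j+1)" by (rule a_odd)
    finally show "mat (?n-Suc k) (?n-Suc k) (\<lambda>(i,j). H ?n 0 $$ (ev_first ?n (Suc k+i), od_first ?n (Suc k+j))) $$ (i,j) = H k 1 $$ (i,j)"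
      using ij by simp
  qed (auto simp: H_def)
  also have "\<bar>det ?B\<bar> = \<bar>det (H k 1)\<bar>"
  proof -
    have Bc: "?B \<in> carrier_mat (Suc k) (Suc k)" by simp
    have zB: "?B $$ (rot1 k i, id j) = 0" if "i < k" "k \<le> j" "j < Suc k" for i j
    proof -
      have jk: "j = k" using that by auto
      have "?B $$ (rot1 k i, id j) = a_seq (2*(Suc i) + 0 + 0)"
        using that jk O1b[of 0 k] E1a[of "Suc i" k] by (simp add: rot1_def)
      also have "\<dots> = 0" by (rule a_even') presburger+
      finally show ?thesis .
    qed
    have "\<bar>det ?B\<bar> = \<bar>det (mat k k (\<lambda>(i,j). ?B $$ (rot1 k i, id j)))\<bar>
       * \<bar>det (mat (Suc k - k) (Suc k - k) (\<lambda>(i,j). ?B $$ (rot1 k (k+i), id (k+j))))\<bar>"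
      by (rule block_det[OF Bc rot1_perm permutes_id]) (use zB in auto)
    also have "mat k k (\<lambda>(i,j). ?B $$ (rot1 k i, id j)) = H k 1"
    proof (rule eq_matI)
      fix i j assume "i < dim_row (H k 1)" "j < dim_col (H k 1)"
      hence ij: "i < k" "j < k" unfolding H_def by auto
      have "?B $$ (rot1 k i, id j) = a_seq (2*(Suc i)+(2*j+1)+0)"
        using ij E1a[of "Suc i" k] by (simp add: rot1_def O1a)
      also have "\<dots> = a_seq (2*(i+j+1)+1)" by (intro arg_cong[where f=a_seq]) simp
      also have "\<dots> = a_seq (i+j+1)" by (rule a_odd)
      finally show "mat k k (\<lambda>(i,j). ?B $$ (rot1 k i, id j)) $$ (i,j) = H k 1 $$ (i,j)"
        using ij by simp
    qed (auto simp: H_def)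
    also have "mat (Suc k - k) (Suc k - k) (\<lambda>(i,j). ?B $$ (rot1 k (k+i), id (k+j))) = 1\<^sub>m 1"
    proof (rule eq_matI)
      fix i j assume "i < dim_row (1\<^sub>m 1 :: int mat)" "j < dim_col (1\<^sub>m 1 :: int mat)"
      hence ij: "i = 0" "j = 0" by auto
      have "?B $$ (rot1 k (k+i), id (k+j)) = a_seq (0 + 0 + 0)"
        using ij O1b[of 0 k] E1a[of 0 k] by (simp add: rot1_def)
      also have "\<dots> = 1" by (auto simp: a_seq_def intro!: exI[of _ 0])
      finally show "mat (Suc k - k) (Suc k - k) (\<lambda>(i,j). ?B $$ (rot1 k (k+i), id (k+j))) $$ (i,j) = 1\<^sub>m 1 $$ (i,j)"
        using ij by simp
    qed auto
    finally show ?thesis by simp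
  qed
  finally show ?thesis by (simp add: hd_H)
qed


lemma hd_0: "hankel_d 0 m = 1" unfolding hankel_d_def by simp

lemma D01: "\<bar>hankel_d n 0\<bar> = 1 \<and> \<bar>hankel_d n 1\<bar> = 1"
proof (induction n rule: less_induct)
  case (less n)
  show ?case
  proof (cases "n = 0")
    case True thus ?thesis by (simp add: hd_0)
  next
    case False
    have d0: "\<bar>hankel_d n 0\<bar> = 1"
    proof (cases "even n")
      case True
      then obtain k where k: "n = 2*k" by auto
      with False have "k < n" by simp
      hence "\<bar>hankel_d k 0\<bar> = 1" using less by blast
      thus ?thesis using L5[of k] k by simp
    next
      case False
      then obtain k where k: "n = 2*k+1" using oddE by blast
      hence "k < n" by simp
      hence "\<bar>hankel_d k 1\<bar> = 1" using less by blast
      thus ?thesis using L4[of k] k by simp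
    qed
    have "\<bar>hankel_d n (2*0+1)\<bar> = \<bar>hankel_d ((n+1) div 2) 0\<bar> * \<bar>hankel_d (n div 2) (0+1)\<bar>"
      by (rule L1)
    moreover have "\<bar>hankel_d ((n+1) div 2) 0\<bar> = 1"
    proof (cases "n = 1")
      case True thus ?thesis using d0 by simp
    next
      case False
      with \<open>n \<noteq> 0\<close> have "(n+1) div 2 < n" by simp
      thus ?thesis using less by blast
    qed
    moreover have "\<bar>hankel_d (n div 2) 1\<bar> = 1" using less \<open>n \<noteq> 0\<close> by simp
    ultimately show ?thesis using d0 by simp
  qed
qed

definition cnd :: "nat \<Rightarrow> nat \<Rightarrow> nat \<Rightarrow> bool" where
  "cnd n m M = (M dvd n \<or> M dvd (n + m))"

lemma cnd_half: "m \<ge> 1 \<Longrightarrow> cnd x m (2*m) = (m dvd x)"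
proof -
  assume m: "m \<ge> 1"
  show ?thesis
  proof
    assume "cnd x m (2*m)"
    hence "m dvd x \<or> m dvd x + m" unfolding cnd_def using dvd_mult_right by blast
    thus "m dvd x" by auto
  next
    assume "m dvd x"
    then obtain t where t: "x = m*t" by auto
    show "cnd x m (2*m)"
    proof (cases "even t")
      case True
      then obtain u where "t = 2*u" by auto
      with t have "x = (2*m)*u" by simp
      thus ?thesis unfolding cnd_def by simp
    next
      case False
      then obtain u where "t = 2*u+1" using oddE by blast
      with t have "x + m = (2*m)*(u+1)" by (simp add: algebra_simps)
      thus ?thesis unfolding cnd_def by simp
    qed
  qed
qed

lemma nt_a: "((2::nat)*M dvd 2*x) = (M dvd x)" by simp
lemma nt_b: "odd (x::nat) \<Longrightarrow> \<not> (2*M) dvd x" using dvd_mult_left by blast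
lemma nt_c: "(M::nat) \<ge> 2 \<Longrightarrow> M dvd x \<Longrightarrow> \<not> M dvd (x+1)"
  using dvd_add_right_iff[of M x 1] by auto

lemma G:
  assumes "m \<ge> 1" "2^e < 2*m" "m \<le> 2^e"
  shows "\<bar>hankel_d n m\<bar> = (if cnd n m (2^e) then 1 else 0)"
  using assms
proof (induction m arbitrary: n e rule: less_induct)
  case (less m)
  show ?case
  proof (cases "m = 1")
    case True
    with less.prems have "e = 0" by (cases e) auto
    thus ?thesis using True D01[of n] by (simp add: cnd_def)
  next
    case m1: False
    have "e \<noteq> 0"
    proof
      assume "e = 0"
      with less.prems m1 show False by simp
    qed
    then obtain e' where e: "e = Suc e'" by (cases e) auto
    define M where "M = (2::nat)^e'"
    have eM: "(2::nat)^e = 2*M" unfolding M_def e by simp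
    show ?thesis
    proof (cases "even m")
      case True
      then obtain m' where m': "m = 2*m'" by auto
      have m'1: "m' \<ge> 1" "m' < m" using m' less.prems m1 by auto
      have IH: "\<bar>hankel_d x m'\<bar> = (if cnd x m' M then 1 else 0)" for x
        using less.IH[OF m'1(2) m'1(1)] less.prems eM m' unfolding M_def by simp
      show ?thesis
      proof (cases "even n")
        case True
        then obtain k where k: "n = 2*k" by auto
        have "n + m = 2*(k+m')" using k m' by simp
        hence "cnd n m (2^e) = cnd k m' M" using k eM unfolding cnd_def by (simp only: nt_a)
        thus ?thesis using L2[OF m'1(1), of k] IH[of k] k m' by simp
      next
        case False
        then obtain k where k: "n = 2*k+1" using oddE by blast
        have "odd (n+m)" using False m' by simp
        hence "\<not> cnd n m (2^e)" using False eM unfolding cnd_def by (simp add: nt_b)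
        thus ?thesis using L3[OF m'1(1), of k] k m' by simp
      qed
    next
      case False
      then obtain m' where m': "m = 2*m'+1" using oddE by blast
      have m'1: "m' \<ge> 1" "m' < m" "m'+1 < m" using m' m1 by auto
      have M2: "M \<ge> 2" using less.prems eM m' m'1 by simp
      have mM: "m'+1 \<le> M" using less.prems eM m' by simp
      have IH2: "\<bar>hankel_d x (m'+1)\<bar> = (if cnd x (m'+1) M then 1 else 0)" for x
        using less.IH[OF m'1(3), of e' x] less.prems eM m' unfolding M_def by simp
      have IH1: "\<bar>hankel_d x m'\<bar> = (if cnd x m' M then 1 else 0)" for x
      proof (cases "M < 2*m'")
        case True
        thus ?thesis using less.IH[OF m'1(2) m'1(1), of e' x] mM unfolding M_def by simp
      next
        case False
        hence Mm: "M = 2*m'" using less.prems eM m' by simp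
        hence "e' \<noteq> 0" using m'1 unfolding M_def by (cases e') auto
        then obtain e'' where e'': "e' = Suc e''" by (cases e') auto
        have m'p: "m' = 2^e''" using Mm e'' unfolding M_def by simp
        have "\<bar>hankel_d x m'\<bar> = (if cnd x m' (2^e'') then 1 else 0)"
          using less.IH[OF m'1(2) m'1(1), of e'' x] m'p m'1 by simp
        also have "cnd x m' (2^e'') = (m' dvd x)" using m'p unfolding cnd_def by auto
        also have "\<dots> = cnd x m' M" using cnd_half[OF m'1(1)] Mm by simp
        finally show ?thesis .
      qed
      have L: "\<bar>hankel_d n m\<bar> = \<bar>hankel_d ((n+1) div 2) m'\<bar> * \<bar>hankel_d (n div 2) (m'+1)\<bar>"
        using L1[of n m'] m' by simp
      have C: "cnd n m (2^e) = (cnd ((n+1) div 2) m' M \<and> cnd (n div 2) (m'+1) M)"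
      proof (cases "even n")
        case True
        then obtain k where k: "n = 2*k" by auto
        have h: "(n+1) div 2 = k" "n div 2 = k" using k by auto
        have "odd (n+m)" using k m' by simp
        hence "cnd n m (2^e) = (M dvd k)"
          unfolding cnd_def eM using k by (simp add: nt_b nt_a del: mult_2)
        also have "\<dots> = (cnd k m' M \<and> cnd k (m'+1) M)"
        proof
          assume "cnd k m' M \<and> cnd k (m'+1) M"
          moreover have "\<not> (M dvd k + m' \<and> M dvd k + (m'+1))"
            using nt_c[OF M2, of "k+m'"] by (simp add: add.assoc)
          ultimately show "M dvd k" unfolding cnd_def by blast
        qed (auto simp: cnd_def)
        finally show ?thesis using h by simp
      next
        case False
        then obtain k where k: "n = 2*k+1" using oddE by blast
        have h: "(n+1) div 2 = k+1" "n div 2 = k" using k by auto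
        have "n + m = 2*(k+1+m')" using k m' by simp
        moreover have "odd n" using k by simp
        ultimately have "cnd n m (2^e) = (M dvd (k+1+m'))"
          unfolding cnd_def eM by (simp only: nt_a nt_b simp_thms)
        also have "\<dots> = (cnd (k+1) m' M \<and> cnd k (m'+1) M)"
        proof
          assume "cnd (k+1) m' M \<and> cnd k (m'+1) M"
          moreover have "\<not> (M dvd k + 1 \<and> M dvd k)"
            using nt_c[OF M2, of k] by blast
          ultimately show "M dvd (k+1+m')" unfolding cnd_def by (auto simp: algebra_simps)
        qed (auto simp: cnd_def algebra_simps)
        finally show ?thesis using h by simp
      qed
      show ?thesis using L C IH1 IH2 by simp
    qed
  qed
qed


lemma cong_conv:
  "[int n = 0] (mod 2 ^ (K + 1)) \<longleftrightarrow> (2::nat)^(K+1) dvd n"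
  "[int n = - int m] (mod 2 ^ (K + 1)) \<longleftrightarrow> (2::nat)^(K+1) dvd (n+m)"
proof -
  have e: "(2::int)^(K+1) = int (2^(K+1))" by simp
  show "[int n = 0] (mod 2 ^ (K + 1)) \<longleftrightarrow> (2::nat)^(K+1) dvd n"
    unfolding cong_0_iff e int_dvd_int_iff ..
  have "[int n = - int m] (mod 2 ^ (K + 1)) \<longleftrightarrow> (2::int)^(K+1) dvd (int n - - int m)"
    by (rule cong_iff_dvd_diff)
  also have "int n - - int m = int (n+m)" by simp
  finally show "[int n = - int m] (mod 2 ^ (K + 1)) \<longleftrightarrow> (2::nat)^(K+1) dvd (n+m)"
    unfolding e int_dvd_int_iff .
qed

theorem theorem3p1:
  fixes m K n :: nat
  assumes "1 \<le> (2::nat) ^ K" and "2 ^ K < m" and "m \<le> 2 ^ (K + 1)"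
  shows "(([int n = 0] (mod 2 ^ (K + 1)) \<or> [int n = - int m] (mod 2 ^ (K + 1)))
            \<longrightarrow> hankel_d n m \<in> {1, -1})
       \<and> (\<not> ([int n = 0] (mod 2 ^ (K + 1)) \<or> [int n = - int m] (mod 2 ^ (K + 1)))
            \<longrightarrow> hankel_d n m = 0)"
proof -
  have g: "\<bar>hankel_d n m\<bar> = (if cnd n m (2^(K+1)) then 1 else 0)"
    by (rule G) (use assms in auto)
  have c: "([int n = 0] (mod 2 ^ (K + 1)) \<or> [int n = - int m] (mod 2 ^ (K + 1))) = cnd n m (2^(K+1))"
    unfolding cong_conv cnd_def ..
  show ?thesis unfolding c using g by (cases "cnd n m (2^(K+1))") (auto simp: abs_if split: if_splits)
qed

end
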